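(* Let $\langle A,\to\rangle$ be a conditional algebra that also satisfies $(a\to c)\wedge(b\to c)\le(a\vee b)\to c$ for all $a,b,c$. Let $F,H$ be filters of $A$ with $F\neq A$, and let $u$ be an ultrafilter. If $D^{\to}_H(F)\subseteq u$, then there exists an ultrafilter $v$ with $F\subseteq v$ and $D^{\to}_H(v)\subseteq u$.
   Context: A conditional algebra is $\langle A,\to\rangle$ with $A$ a Boolean algebra and $\to$ binary with $a\to1=1$, $(a\to b)\wedge(a\to c)=a\to(b\wedge c)$, $(a\vee b)\to c\le(a\to c)\wedge(b\to c)$. Filters include the improper filter $A$. For $X,Y\subseteq A$, $D^{\to}_X(Y)=\{b\in A:\exists a\in Y,\ a\to b\in X\}$. *)

theory Defs
  imports Main
begin

definition conditional_algebra :: "('a::boolean_algebra \<Rightarrow> 'a \<Rightarrow> 'a) \<Rightarrow> bool" where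
  "conditional_algebra imp \<longleftrightarrow>
     (\<forall>a. imp a top = top) \<and>
     (\<forall>a b c. inf (imp a b) (imp a c) = imp a (inf b c)) \<and>
     (\<forall>a b c. imp (sup a b) c \<le> inf (imp a c) (imp b c))"

definition is_filter :: "'a::boolean_algebra set \<Rightarrow> bool" where
  "is_filter F \<longleftrightarrow> top \<in> F \<and>
     (\<forall>a b. a \<in> F \<longrightarrow> a \<le> b \<longrightarrow> b \<in> F) \<and>
     (\<forall>a b. a \<in> F \<longrightarrow> b \<in> F \<longrightarrow> inf a b \<in> F)"

definition is_ultrafilter :: "'a::boolean_algebra set \<Rightarrow> bool" where
  "is_ultrafilter U \<longleftrightarrow> is_filter U \<and> U \<noteq> UNIV \<and>
     (\<forall>G. is_filter G \<longrightarrow> U \<subseteq> G \<longrightarrow> G = U \<or> G = UNIV)"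

definition D_imp :: "('a \<Rightarrow> 'a \<Rightarrow> 'a) \<Rightarrow> 'a set \<Rightarrow> 'a set \<Rightarrow> 'a set" where
  "D_imp imp X Y = {b. \<exists>a\<in>Y. imp a b \<in> X}"

end

theory Submission
  imports Defs
begin

lemma imp_mono2:
  assumes "conditional_algebra imp" "b \<le> c"
  shows "imp a b \<le> imp a c"
proof -
  have "inf (imp a b) (imp a c) = imp a (inf b c)" using assms(1) unfolding conditional_algebra_def by blast
  also have "inf b c = b" using assms(2) by (simp add: inf_absorb1)
  finally show ?thesis by (metis inf.orderI)
qed

lemma imp_anti1:
  assumes "conditional_algebra imp" "a' \<le> a"
  shows "imp a c \<le> imp a' c"
proof -
  have "imp (sup a a') c \<le> inf (imp a c) (imp a' c)" using assms(1) unfolding conditional_algebra_def by blast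
  moreover have "sup a a' = a" using assms(2) by (simp add: sup_absorb1)
  ultimately show ?thesis by (metis le_inf_iff)
qed

lemma filter_up: "is_filter F \<Longrightarrow> a \<in> F \<Longrightarrow> a \<le> b \<Longrightarrow> b \<in> F"
  unfolding is_filter_def by blast

lemma filter_inf: "is_filter F \<Longrightarrow> a \<in> F \<Longrightarrow> b \<in> F \<Longrightarrow> inf a b \<in> F"
  unfolding is_filter_def by blast

lemma filter_top: "is_filter F \<Longrightarrow> top \<in> F"
  unfolding is_filter_def by blast

lemma gen_filter:
  assumes "is_filter M"
  shows "is_filter {y. \<exists>m\<in>M. inf m x \<le> y}"
  unfolding is_filter_def
proof (intro conjI allI impI)
  show "top \<in> {y. \<exists>m\<in>M. inf m x \<le> y}" using filter_top[OF assms] by auto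
next
  fix a b assume "a \<in> {y. \<exists>m\<in>M. inf m x \<le> y}" "a \<le> b"
  then show "b \<in> {y. \<exists>m\<in>M. inf m x \<le> y}" using order_trans by blast
next
  fix a b assume "a \<in> {y. \<exists>m\<in>M. inf m x \<le> y}" "b \<in> {y. \<exists>m\<in>M. inf m x \<le> y}"
  then obtain m1 m2 where "m1 \<in> M" "m2 \<in> M" "inf m1 x \<le> a" "inf m2 x \<le> b" by auto
  moreover have "inf (inf m1 m2) x \<le> inf m1 x" "inf (inf m1 m2) x \<le> inf m2 x"
    by (simp_all add: le_infI1 inf_mono)
  ultimately have "inf (inf m1 m2) x \<le> inf a b" "inf m1 m2 \<in> M"
    using filter_inf[OF assms] order_trans by (blast intro: le_infI)+
  then show "inf a b \<in> {y. \<exists>m\<in>M. inf m x \<le> y}" by blast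
qed

lemma ultra_prime:
  assumes "is_ultrafilter u" "sup b1 b2 \<in> u" "b1 \<notin> u"
  shows "b2 \<in> u"
proof -
  have fu: "is_filter u" using assms(1) unfolding is_ultrafilter_def by blast
  let ?G = "{y. \<exists>m\<in>u. inf m b1 \<le> y}"
  have "is_filter ?G" using gen_filter[OF fu] .
  moreover have "u \<subseteq> ?G" by (auto intro: le_infI1)
  moreover have "b1 \<in> ?G" using filter_top[OF fu] by auto
  ultimately have "?G = UNIV" using assms unfolding is_ultrafilter_def by blast
  then obtain m where m: "m \<in> u" "inf m b1 \<le> bot" by blast
  have "inf m (sup b1 b2) \<in> u" using filter_inf[OF fu m(1) assms(2)] .
  moreover have "inf m (sup b1 b2) \<le> b2"
    using m(2) by (metis bot_unique inf_le2 inf_sup_distrib1 sup_bot_left)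
  ultimately show ?thesis using filter_up[OF fu] by blast
qed

theorem lemma9p2:
  fixes imp :: "'a::boolean_algebra \<Rightarrow> 'a \<Rightarrow> 'a"
    and F H u :: "'a set"
  assumes "conditional_algebra imp"
    and "\<forall>a b c. inf (imp a c) (imp b c) \<le> imp (sup a b) c"
    and "is_filter F" and "is_filter H" and "F \<noteq> UNIV"
    and "is_ultrafilter u"
    and "D_imp imp H F \<subseteq> u"
  shows "\<exists>v. is_ultrafilter v \<and> F \<subseteq> v \<and> D_imp imp H v \<subseteq> u"
proof -
  note ca = assms(1)
  define J where "J = {a. a = bot \<or> (\<exists>b. b \<notin> u \<and> imp a b \<in> H)}"
  have Jdown: "a \<in> J" if "a' \<in> J" "a \<le> a'" for a a'
  proof -
    { assume "a' = bot" then have ?thesis using that J_def by (simp add: bot_unique) }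
    moreover
    { fix b assume "b \<notin> u" "imp a' b \<in> H"
      then have "imp a b \<in> H" using filter_up[OF assms(4)] imp_anti1[OF ca that(2)] by blast
      then have ?thesis using \<open>b \<notin> u\<close> J_def by blast }
    ultimately show ?thesis using that J_def by blast
  qed
  have Jsup: "sup a a' \<in> J" if "a \<in> J" "a' \<in> J" for a a'
  proof -
    { assume "a = bot" then have ?thesis using that by simp }
    moreover
    { assume "a' = bot" then have ?thesis using that by simp }
    moreover
    { fix b b' assume b: "b \<notin> u" "imp a b \<in> H" "b' \<notin> u" "imp a' b' \<in> H"
      have "sup b b' \<notin> u" using ultra_prime[OF assms(6)] b by blast
      have "imp a (sup b b') \<in> H" using filter_up[OF assms(4) b(2)] imp_mono2[OF ca] by simp
      moreover have "imp a' (sup b b') \<in> H" using filter_up[OF assms(4) b(4)] imp_mono2[OF ca] by simp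
      ultimately have "imp (sup a a') (sup b b') \<in> H"
        using filter_inf[OF assms(4)] filter_up[OF assms(4)] assms(2) by blast
      then have ?thesis using \<open>sup b b' \<notin> u\<close> J_def by blast }
    ultimately show ?thesis using that J_def by blast
  qed
  have FJ: "F \<inter> J = {}"
  proof (rule ccontr)
    assume "F \<inter> J \<noteq> {}"
    then obtain a where a: "a \<in> F" "a \<in> J" by blast
    { assume "a = bot" then have "F = UNIV" using a filter_up[OF assms(3)] by (metis UNIV_eq_I bot_least)
      then have False using assms(5) by blast }
    moreover
    { fix b assume "b \<notin> u" "imp a b \<in> H"
      then have "b \<in> D_imp imp H F" using a D_imp_def by fastforce
      then have False using assms(7) \<open>b \<notin> u\<close> by blast }
    ultimately show False using a J_def by blast
  qed
  define A where "A = {G. is_filter G \<and> F \<subseteq> G \<and> G \<inter> J = {}}"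
  have "\<forall>C\<in>chains A. \<exists>U\<in>A. \<forall>X\<in>C. X \<subseteq> U"
  proof
    fix C assume C: "C \<in> chains A"
    show "\<exists>U\<in>A. \<forall>X\<in>C. X \<subseteq> U"
    proof (cases "C = {}")
      case True
      then show ?thesis using A_def assms(3) FJ by blast
    next
      case False
      have CA: "C \<subseteq> A" and ch: "\<forall>X\<in>C. \<forall>Y\<in>C. X \<subseteq> Y \<or> Y \<subseteq> X"
        using C unfolding chains_def chain_subset_def by auto
      have "is_filter (\<Union>C)" unfolding is_filter_def
      proof (intro conjI allI impI)
        show "top \<in> \<Union>C" using False CA A_def filter_top by blast
      next
        fix a b assume "a \<in> \<Union>C" "a \<le> b" then show "b \<in> \<Union>C"
          using CA A_def filter_up by blast
      next
        fix a b assume "a \<in> \<Union>C" "b \<in> \<Union>C"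
        then obtain X Y where "X \<in> C" "Y \<in> C" "a \<in> X" "b \<in> Y" by blast
        then show "inf a b \<in> \<Union>C" using ch CA A_def filter_inf
          by (metis (no_types, lifting) UnionI mem_Collect_eq subsetD)
      qed
      moreover have "F \<subseteq> \<Union>C" using False CA A_def by blast
      moreover have "\<Union>C \<inter> J = {}" using CA A_def by blast
      ultimately show ?thesis using A_def by blast
    qed
  qed
  from Zorn_Lemma2[OF this] obtain M where M: "M \<in> A" and Mmax: "\<forall>X\<in>A. M \<subseteq> X \<longrightarrow> X = M" by blast
  have fM: "is_filter M" and FM: "F \<subseteq> M" and MJ: "M \<inter> J = {}" using M A_def by auto
  have prime: "x \<in> M \<or> - x \<in> M" for x
  proof (rule ccontr)
    assume nx: "\<not> (x \<in> M \<or> - x \<in> M)"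
    have bad: "\<exists>m\<in>M. \<exists>i\<in>J. inf m y \<le> i" if "y \<notin> M" for y
    proof -
      let ?G = "{z. \<exists>m\<in>M. inf m y \<le> z}"
      have g: "is_filter ?G" using gen_filter[OF fM] .
      have "M \<subseteq> ?G" by (auto intro: le_infI1)
      moreover have "y \<in> ?G" using filter_top[OF fM] by auto
      ultimately have "?G \<notin> A" using Mmax that by blast
      then have "?G \<inter> J \<noteq> {}" using g FM \<open>M \<subseteq> ?G\<close> A_def by blast
      then show ?thesis by blast
    qed
    obtain m1 i1 where 1: "m1 \<in> M" "i1 \<in> J" "inf m1 x \<le> i1" using bad nx by blast
    obtain m2 i2 where 2: "m2 \<in> M" "i2 \<in> J" "inf m2 (- x) \<le> i2" using bad nx by blast
    have mM: "inf m1 m2 \<in> M" using filter_inf[OF fM 1(1) 2(1)] .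
    have "inf m1 m2 = sup (inf (inf m1 m2) x) (inf (inf m1 m2) (- x))"
      by (metis inf_sup_distrib1 inf_top_right sup_compl_top)
    also have "\<dots> \<le> sup i1 i2"
      using 1(3) 2(3) by (meson inf_le1 inf_le2 le_infE sup.mono order_trans le_infI)
    finally have "inf m1 m2 \<in> J" using Jdown Jsup 1(2) 2(2) by blast
    then show False using mM MJ by blast
  qed
  have ultra: "is_ultrafilter M"
    unfolding is_ultrafilter_def
  proof (intro conjI allI impI)
    show "is_filter M" by (rule fM)
    show "M \<noteq> UNIV" using MJ J_def by blast
  next
    fix G assume G: "is_filter G" "M \<subseteq> G"
    show "G = M \<or> G = UNIV"
    proof (cases "G \<subseteq> M")
      case True then show ?thesis using G by blast
    next
      case False
      then obtain g where "g \<in> G" "g \<notin> M" by blast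
      then have "- g \<in> G" using prime G by blast
      then have "bot \<in> G" using filter_inf[OF G(1) \<open>g \<in> G\<close> \<open>- g \<in> G\<close>] by simp
      then have "G = UNIV" using filter_up[OF G(1)] by (metis UNIV_eq_I bot_least)
      then show ?thesis by blast
    qed
  qed
  have "D_imp imp H M \<subseteq> u"
  proof
    fix b assume "b \<in> D_imp imp H M"
    then obtain a where "a \<in> M" "imp a b \<in> H" unfolding D_imp_def by blast
    show "b \<in> u"
    proof (rule ccontr)
      assume "b \<notin> u"
      then have "a \<in> J" using \<open>imp a b \<in> H\<close> J_def by blast
      then show False using MJ \<open>a \<in> M\<close> by blast
    qed
  qed
  then show ?thesis using ultra FM by blast
qed

end
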